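(* Let $T\in\mathrm{Aut}_1(X,\mathcal{A},\mu)$. If $T$ is conservative, then $\chi(T)=0$.
   Context: $(X,\mathcal{A},\mu)$ is a standard $\sigma$-finite non-atomic measure space. For an invertible nonsingular $T$, $T':=\frac{d\mu\circ T^{-1}}{d\mu}$; $\mathrm{Aut}_1(X,\mathcal{A},\mu)$ is the group of invertible nonsingular $T$ with $T'-1\in L^1(\mu)$, and $\chi(T):=\int_X(T'-1)\,d\mu$. $T$ is conservative if for every $A\in\mathcal A$ with $\mu(A)>0$ there is $n>0$ with $\mu(T^{-n}A\cap A)>0$. *)

theory Defs
  imports "HOL-Analysis.Analysis"
begin

text \<open>Standard Borel space: measurably isomorphic to a Borel subset of the reals
  (equivalent, by Kuratowski's theorem, to being isomorphic to the Borel space of a Polish space).\<close>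
definition standard_borel :: "'a measure \<Rightarrow> bool" where
  "standard_borel M \<longleftrightarrow> (\<exists>(B::real set) f g. B \<in> sets borel \<and>
      f \<in> measurable M (restrict_space borel B) \<and> g \<in> measurable (restrict_space borel B) M \<and>
      (\<forall>x\<in>space M. g (f x) = x) \<and> (\<forall>y\<in>B. f (g y) = y))"

definition non_atomic :: "'a measure \<Rightarrow> bool" where
  "non_atomic M \<longleftrightarrow> (\<forall>A\<in>sets M. 0 < emeasure M A \<longrightarrow>
      (\<exists>B\<in>sets M. B \<subseteq> A \<and> 0 < emeasure M B \<and> emeasure M B < emeasure M A))"

definition inv_nonsingular :: "'a measure \<Rightarrow> ('a \<Rightarrow> 'a) \<Rightarrow> bool" where
  "inv_nonsingular M T \<longleftrightarrow> T \<in> measurable M M \<and> bij_betw T (space M) (space M) \<and>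
     the_inv_into (space M) T \<in> measurable M M \<and>
     (\<forall>A\<in>sets M. emeasure M A = 0 \<longleftrightarrow> emeasure M (T -` A \<inter> space M) = 0)"

text \<open>\<open>T' = d(\<mu>\<circ>T\<^sup>-\<^sup>1)/d\<mu>\<close>; note \<open>distr M M T A = \<mu>(T\<^sup>-\<^sup>1 A)\<close>.\<close>
definition Tder :: "'a measure \<Rightarrow> ('a \<Rightarrow> 'a) \<Rightarrow> 'a \<Rightarrow> real" where
  "Tder M T x = enn2real (RN_deriv M (distr M M T) x)"

definition Aut1 :: "'a measure \<Rightarrow> ('a \<Rightarrow> 'a) set" where
  "Aut1 M = {T. inv_nonsingular M T \<and> integrable M (\<lambda>x. Tder M T x - 1)}"

definition chi :: "'a measure \<Rightarrow> ('a \<Rightarrow> 'a) \<Rightarrow> real" where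
  "chi M T = (\<integral>x. (Tder M T x - 1) \<partial>M)"

definition conservative :: "'a measure \<Rightarrow> ('a \<Rightarrow> 'a) \<Rightarrow> bool" where
  "conservative M T \<longleftrightarrow> (\<forall>A\<in>sets M. 0 < emeasure M A \<longrightarrow>
      (\<exists>n>0. 0 < emeasure M ((T ^^ n) -` A \<inter> A)))"

end

theory Submission
  imports Defs
begin

locale setting = sigma_finite_measure M for M :: "'a measure" +
  fixes T :: "'a \<Rightarrow> 'a"
  assumes meas: "T \<in> measurable M M" and bij: "bij_betw T (space M) (space M)"
    and invmeas: "the_inv_into (space M) T \<in> measurable M M"
    and null: "\<forall>A\<in>sets M. emeasure M A = 0 \<longleftrightarrow> emeasure M (T -` A \<inter> space M) = 0"
    and intg: "integrable M (\<lambda>x. Tder M T x - 1)"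
    and cons: "conservative M T"
begin

abbreviation "S \<equiv> the_inv_into (space M) T"
abbreviation "f \<equiv> Tder M T"
abbreviation "g \<equiv> (\<lambda>x. Tder M T x - 1)"
abbreviation "N \<equiv> distr M M T"

lemma T_sp: "x \<in> space M \<Longrightarrow> T x \<in> space M"
  using meas by (meson measurable_space)
lemma S_sp: "x \<in> space M \<Longrightarrow> S x \<in> space M"
  using invmeas by (meson measurable_space)
lemma ST: "x \<in> space M \<Longrightarrow> S (T x) = x"
  using bij by (simp add: bij_betw_def the_inv_into_f_f)
lemma TS: "x \<in> space M \<Longrightarrow> T (S x) = x"
  using bij by (simp add: bij_betw_def f_the_inv_into_f)

lemma Tn_sp: "x \<in> space M \<Longrightarrow> (T^^n) x \<in> space M"
  by (induction n) (auto simp: T_sp)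
lemma Sn_sp: "x \<in> space M \<Longrightarrow> (S^^n) x \<in> space M"
  by (induction n) (auto simp: S_sp)
lemma SnTn: "x \<in> space M \<Longrightarrow> (S^^n) ((T^^n) x) = x"
proof (induction n arbitrary: x)
  case (Suc n)
  have "(S^^Suc n) ((T^^Suc n) x) = (S^^n) (S (T ((T^^n) x)))"
    by (simp only: funpow_Suc_right comp_def) (simp add: funpow_swap1)
  also have "\<dots> = x" using Suc by (simp add: ST Tn_sp)
  finally show ?case .
qed simp

lemma Tn_meas: "(T^^n) \<in> measurable M M"
  by (induction n) (auto intro: measurable_compose[OF _ meas])
lemma Sn_meas: "(S^^n) \<in> measurable M M"
  by (induction n) (auto intro: measurable_compose[OF _ invmeas])

lemma emN: "A \<in> sets M \<Longrightarrow> emeasure N A = emeasure M (T -` A \<inter> space M)"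
  by (simp add: emeasure_distr meas)

lemma ac: "absolutely_continuous M N"
  unfolding absolutely_continuous_def
proof
  fix A assume "A \<in> null_sets M"
  then show "A \<in> null_sets N" using null emN by (auto simp: null_sets_def)
qed

lemma sfN: "sigma_finite_measure N"
proof -
  obtain A :: "nat \<Rightarrow> 'a set" where A: "range A \<subseteq> sets M" "(\<Union>i. A i) = space M"
      "\<And>i. emeasure M (A i) \<noteq> \<infinity>" "incseq A"
    using sigma_finite_incseq by blast
  define C where "C i = S -` A i \<inter> space M" for i
  have Cs: "C i \<in> sets M" for i using A invmeas unfolding C_def by (auto simp: measurable_sets)
  have TC: "T -` C i \<inter> space M = A i" for i
    using A(1) sets.sets_into_space[of "A i" M] by (auto simp: C_def ST T_sp)
  show ?thesis
  proof
    show "\<exists>A. countable A \<and> A \<subseteq> sets N \<and> \<Union> A = space N \<and> (\<forall>a\<in>A. emeasure N a \<noteq> \<infinity>)"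
    proof (intro exI[of _ "range C"] conjI)
      show "range C \<subseteq> sets N" using Cs by auto
      show "\<Union> (range C) = space N"
      proof
        show "\<Union> (range C) \<subseteq> space N" by (auto simp: C_def)
        show "space N \<subseteq> \<Union> (range C)"
        proof
          fix x assume "x \<in> space N"
          then have x: "x \<in> space M" by simp
          then have "S x \<in> space M" by (rule S_sp)
          then obtain i where "S x \<in> A i" using A(2) by auto
          then show "x \<in> \<Union> (range C)" using x by (auto simp: C_def)
        qed
      qed
      show "\<forall>a\<in>range C. emeasure N a \<noteq> \<infinity>" using emN Cs TC A(3) by auto
    qed simp
  qed
qed

lemma RN_fin: "AE x in M. RN_deriv M N x \<noteq> \<infinity>"
  by (rule RN_deriv_finite[OF sfN ac]) simp

lemma F1: assumes "A \<in> sets M"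
  shows "emeasure M (T -` A \<inter> space M) = (\<integral>\<^sup>+x. ennreal (f x * indicator A x) \<partial>M)"
proof -
  have "emeasure M (T -` A \<inter> space M) = emeasure N A" using emN assms by simp
  also have "\<dots> = emeasure (density M (RN_deriv M N)) A"
    using density_RN_deriv[OF ac] by simp
  also have "\<dots> = (\<integral>\<^sup>+x. RN_deriv M N x * indicator A x \<partial>M)"
    using assms by (simp add: emeasure_density)
  also have "\<dots> = (\<integral>\<^sup>+x. ennreal (f x * indicator A x) \<partial>M)"
    using RN_fin
    by (intro nn_integral_cong_AE) (auto simp: Tder_def indicator_def less_top)
  finally show ?thesis .
qed

lemma F2: assumes A: "A \<in> sets M" "emeasure M A < \<infinity>"
  shows "emeasure M (T -` A \<inter> space M) < \<infinity>"
    and "measure M (T -` A \<inter> space M) = measure M A + (\<integral>x. indicator A x * g x \<partial>M)"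
proof -
  have i1: "integrable M (\<lambda>x. indicator A x * g x)"
    using integrable_real_mult_indicator[OF A(1) intg] by (simp add: mult.commute)
  have i2: "integrable M (indicator A :: 'a \<Rightarrow> real)" using A by auto
  have eq: "(\<lambda>x. f x * indicator A x) = (\<lambda>x. indicator A x + indicator A x * g x)"
    by (auto simp: indicator_def)
  have i3: "integrable M (\<lambda>x. f x * indicator A x)" unfolding eq using i1 i2 by auto
  have "emeasure M (T -` A \<inter> space M) = ennreal (\<integral>x. f x * indicator A x \<partial>M)"
    unfolding F1[OF A(1)]
    by (rule nn_integral_eq_integral[OF i3]) (auto simp: Tder_def)
  moreover have "(\<integral>x. f x * indicator A x \<partial>M) = measure M A + (\<integral>x. indicator A x * g x \<partial>M)"
    unfolding eq using i1 i2 A by (simp add: Bochner_Integration.integral_add)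
  moreover have "0 \<le> (\<integral>x. f x * indicator A x \<partial>M)"
    by (auto simp: Tder_def)
  ultimately show "emeasure M (T -` A \<inter> space M) < \<infinity>"
    and "measure M (T -` A \<inter> space M) = measure M A + (\<integral>x. indicator A x * g x \<partial>M)"
    by (auto simp: measure_def)
qed

lemma g_meas[measurable]: "g \<in> borel_measurable M" using intg by auto
lemma f_meas[measurable]: "f \<in> borel_measurable M"
proof -
  have "(\<lambda>x. g x + 1) \<in> borel_measurable M" by measurable
  then show ?thesis by simp
qed

lemma Fin: assumes A: "A \<in> sets M" "emeasure M A < \<infinity>"
  shows "emeasure M (S -` A \<inter> space M) < \<infinity>"
proof -
  define P where "P = S -` A \<inter> space M"
  have Ps: "P \<in> sets M" using A invmeas by (auto simp: P_def measurable_sets)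
  have TP: "T -` P \<inter> space M = A"
    using sets.sets_into_space[OF A(1)] by (auto simp: P_def ST T_sp)
  have "emeasure M P = (\<integral>\<^sup>+x. indicator P x \<partial>M)" using Ps by simp
  also have "\<dots> \<le> (\<integral>\<^sup>+x. 2 * ennreal (f x * indicator P x) + 2 * ennreal \<bar>g x\<bar> \<partial>M)"
  proof (rule nn_integral_mono)
    fix x
    have "indicator P x \<le> 2 * (f x * indicator P x) + 2 * \<bar>g x\<bar>"
      by (auto simp: indicator_def Tder_def abs_if)
    then have "ennreal (indicator P x) \<le> ennreal (2 * (f x * indicator P x) + 2 * \<bar>g x\<bar>)"
      by (rule ennreal_leI)
    also have "\<dots> = 2 * ennreal (f x * indicator P x) + 2 * ennreal \<bar>g x\<bar>"
      by (simp add: ennreal_plus ennreal_mult Tder_def)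
    finally show "indicator P x \<le> 2 * ennreal (f x * indicator P x) + 2 * ennreal \<bar>g x\<bar>"
      by (simp only: ennreal_indicator)
  qed
  also have "\<dots> = 2 * (\<integral>\<^sup>+x. ennreal (f x * indicator P x) \<partial>M) + 2 * (\<integral>\<^sup>+x. ennreal \<bar>g x\<bar> \<partial>M)"
    using Ps by (simp add: nn_integral_add nn_integral_cmult)
  also have "\<dots> = 2 * emeasure M A + 2 * (\<integral>\<^sup>+x. ennreal \<bar>g x\<bar> \<partial>M)"
    using F1[OF Ps] TP by simp
  also have "\<dots> < \<infinity>"
    using A intg by (simp add: ennreal_mult_less_top integrable_iff_bounded)
  finally show ?thesis by (simp add: P_def)
qed

lemma lower: assumes B: "B \<in> sets M" "emeasure M B < \<infinity>"
  shows "\<exists>E\<in>sets M. B \<subseteq> E \<and> 0 \<le> (\<integral>x. indicator E x * g x \<partial>M)"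
proof -
  define A where "A K = (\<Union>k\<le>K. (T^^k) -` B \<inter> space M)" for K
  have Bsp: "B \<subseteq> space M" using sets.sets_into_space[OF B(1)] .
  have As: "A K \<in> sets M" for K
    unfolding A_def by (rule sets.finite_UN) (auto intro: measurable_sets[OF Tn_meas B(1)])
  have A0: "A 0 = B" using Bsp by (auto simp: A_def)
  have AS: "A (Suc K) = B \<union> (T -` A K \<inter> space M)" for K
  proof (intro equalityI subsetI)
    fix x assume "x \<in> A (Suc K)"
    then obtain k where k: "k \<le> Suc K" "(T^^k) x \<in> B" "x \<in> space M" by (auto simp: A_def)
    show "x \<in> B \<union> (T -` A K \<inter> space M)"
    proof (cases k)
      case 0 then show ?thesis using k by simp
    next
      case (Suc j)
      then have "(T^^j) (T x) \<in> B" using k by (simp add: funpow_swap1)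
      then have "T x \<in> A K" using k Suc T_sp[OF k(3)] by (auto simp: A_def)
      then show ?thesis using k by auto
    qed
  next
    fix x assume x: "x \<in> B \<union> (T -` A K \<inter> space M)"
    show "x \<in> A (Suc K)"
    proof (cases "x \<in> B")
      case True then show ?thesis using Bsp unfolding A_def by (auto intro!: bexI[of _ 0])
    next
      case False
      then obtain j where j: "j \<le> K" "(T^^j) (T x) \<in> B" "x \<in> space M" using x by (auto simp: A_def)
      then have "(T^^Suc j) x \<in> B" by (simp add: funpow_swap1)
      then show ?thesis using j unfolding A_def by (auto intro!: bexI[of _ "Suc j"])
    qed
  qed
  have Afin: "emeasure M (A K) < \<infinity>" for K
  proof (induction K)
    case 0 then show ?case using A0 B by simp
  next
    case (Suc K)
    have "emeasure M (A (Suc K)) \<le> emeasure M B + emeasure M (T -` A K \<inter> space M)"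
      unfolding AS by (rule emeasure_subadditive) (use B As measurable_sets[OF meas As] in auto)
    also have "\<dots> < \<infinity>" using F2(1)[OF As Suc] B by simp
    finally show ?case .
  qed
  have incA: "incseq A" unfolding incseq_def A_def by (auto intro: order_trans)
  define V where "V K = B - (T -` A K \<inter> space M)" for K
  have Vs: "V K \<in> sets M" for K unfolding V_def using B As measurable_sets[OF meas As] by auto
  have key: "- measure M (V K) \<le> (\<integral>x. indicator (A K) x * g x \<partial>M)" for K
  proof -
    have "measure M (A (Suc K)) \<le> measure M (T -` A K \<inter> space M) + measure M (V K)"
    proof -
      have "A (Suc K) = (T -` A K \<inter> space M) \<union> V K" unfolding AS V_def by auto
      then show ?thesis using measure_Un_le[OF measurable_sets[OF meas As] Vs] by simp
    qed
    moreover have "measure M (A K) \<le> measure M (A (Suc K))"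
      by (rule measure_mono_fmeasurable) (use incA As Afin in \<open>auto simp: incseq_Suc_iff intro: fmeasurableI\<close>)
    moreover note F2(2)[OF As Afin, of K]
    ultimately show ?thesis by linarith
  qed
  have decV: "decseq V" using incA unfolding decseq_def incseq_def V_def by blast
  have W0: "emeasure M (\<Inter>i. V i) = 0"
  proof (rule ccontr)
    define W where "W = (\<Inter>i. V i)"
    have Ws: "W \<in> sets M" using Vs by (auto simp: W_def)
    assume "emeasure M (\<Inter>i. V i) \<noteq> 0"
    then have "0 < emeasure M W" by (simp add: W_def zero_less_iff_neq_zero)
    then obtain n where n: "n > 0" "0 < emeasure M ((T^^n) -` W \<inter> W)"
      using cons Ws unfolding conservative_def by blast
    have "(T^^n) -` W \<inter> W = {}"
    proof (rule ccontr)
      assume "(T^^n) -` W \<inter> W \<noteq> {}"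
      then obtain x where x: "x \<in> W" "(T^^n) x \<in> W" by auto
      then have xB: "x \<in> B" "(T^^n) x \<in> B" by (auto simp: W_def V_def)
      obtain j where j: "n = Suc j" using n by (cases n) auto
      have "(T^^j) (T x) \<in> B" using xB j by (simp add: funpow_swap1)
      then have "T x \<in> A j" using T_sp xB Bsp by (auto simp: A_def)
      then have "x \<notin> V j" using xB Bsp by (auto simp: V_def)
      then show False using x by (auto simp: W_def)
    qed
    then show False using n by simp
  qed
  have limV: "(\<lambda>K. measure M (V K)) \<longlonglongrightarrow> 0"
  proof -
    have "(\<lambda>K. measure M (V K)) \<longlonglongrightarrow> measure M (\<Inter>i. V i)"
    proof (rule Lim_measure_decseq)
      show "emeasure M (V i) \<noteq> \<infinity>" for i
        using emeasure_mono[of "V i" B M] B Vs by (auto simp: V_def top_unique)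
    qed (use Vs decV in auto)
    then show ?thesis using W0 by (simp add: measure_def)
  qed
  define E where "E = (\<Union>K. A K)"
  have limI: "(\<lambda>K. (\<integral>x. indicator (A K) x * g x \<partial>M)) \<longlonglongrightarrow> (\<integral>x. indicator E x * g x \<partial>M)"
  proof (rule integral_dominated_convergence[where w = "\<lambda>x. \<bar>g x\<bar>"])
    show "(\<lambda>x. indicator E x * g x) \<in> borel_measurable M"
      using As by (auto simp: E_def)
    show "(\<lambda>x. indicator (A K) x * g x) \<in> borel_measurable M" for K
      using As by auto
    show "integrable M (\<lambda>x. \<bar>g x\<bar>)" using intg by auto
    show "AE x in M. (\<lambda>K. indicator (A K) x * g x) \<longlonglongrightarrow> indicator E x * g x"
      unfolding E_def by (intro AE_I2 tendsto_mult_right LIMSEQ_indicator_incseq incA)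
    show "AE x in M. norm (indicator (A K) x * g x) \<le> \<bar>g x\<bar>" for K
      by (intro AE_I2) (auto simp: indicator_def)
  qed
  have "- 0 \<le> (\<integral>x. indicator E x * g x \<partial>M)"
    by (rule LIMSEQ_le[OF tendsto_minus[OF limV] limI]) (use key in auto)
  moreover have "E \<in> sets M" using As by (auto simp: E_def)
  moreover have "B \<subseteq> E" using A0 by (auto simp: E_def)
  ultimately show ?thesis by auto
qed

lemma upper: assumes B: "B \<in> sets M" "emeasure M B < \<infinity>"
  shows "\<exists>E\<in>sets M. B \<subseteq> E \<and> (\<integral>x. indicator E x * g x \<partial>M) \<le> 0"
proof -
  define D where "D K = (\<Union>k\<le>K. (S^^k) -` B \<inter> space M)" for K
  have Bsp: "B \<subseteq> space M" using sets.sets_into_space[OF B(1)] .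
  have Ds: "D K \<in> sets M" for K
    unfolding D_def by (rule sets.finite_UN) (auto intro: measurable_sets[OF Sn_meas B(1)])
  have Dsp: "D K \<subseteq> space M" for K by (auto simp: D_def)
  have D0: "D 0 = B" using Bsp by (auto simp: D_def)
  have DS: "D (Suc K) = B \<union> (S -` D K \<inter> space M)" for K
  proof (intro equalityI subsetI)
    fix x assume "x \<in> D (Suc K)"
    then obtain k where k: "k \<le> Suc K" "(S^^k) x \<in> B" "x \<in> space M" by (auto simp: D_def)
    show "x \<in> B \<union> (S -` D K \<inter> space M)"
    proof (cases k)
      case 0 then show ?thesis using k by simp
    next
      case (Suc j)
      then have "(S^^j) (S x) \<in> B" using k by (simp add: funpow_swap1)
      then have "S x \<in> D K" using k Suc S_sp[OF k(3)] by (auto simp: D_def)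
      then show ?thesis using k by auto
    qed
  next
    fix x assume x: "x \<in> B \<union> (S -` D K \<inter> space M)"
    show "x \<in> D (Suc K)"
    proof (cases "x \<in> B")
      case True then show ?thesis using Bsp unfolding D_def by (auto intro!: bexI[of _ 0])
    next
      case False
      then obtain j where j: "j \<le> K" "(S^^j) (S x) \<in> B" "x \<in> space M" using x by (auto simp: D_def)
      then have "(S^^Suc j) x \<in> B" by (simp add: funpow_swap1)
      then show ?thesis using j unfolding D_def by (auto intro!: bexI[of _ "Suc j"])
    qed
  qed
  have Dfin: "emeasure M (D K) < \<infinity>" for K
  proof (induction K)
    case 0 then show ?case using D0 B by simp
  next
    case (Suc K)
    have "emeasure M (D (Suc K)) \<le> emeasure M B + emeasure M (S -` D K \<inter> space M)"
      unfolding DS by (rule emeasure_subadditive) (use B Ds measurable_sets[OF invmeas Ds] in auto)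
    also have "\<dots> < \<infinity>" using Fin[OF Ds Suc] B by simp
    finally show ?case .
  qed
  have incD: "incseq D" unfolding incseq_def D_def by (auto intro: order_trans)
  define W where "W K = B - (S -` D K \<inter> space M)" for K
  have Ws: "W K \<in> sets M" for K unfolding W_def using B Ds measurable_sets[OF invmeas Ds] by auto
  have TW: "T -` W K \<inter> space M = (T -` B \<inter> space M) - D K" for K
    by (auto simp: W_def ST T_sp dest: subsetD[OF Dsp])
  have TD: "T -` D (Suc K) \<inter> space M = (T -` B \<inter> space M) \<union> D K" for K
    unfolding DS
  proof (intro equalityI subsetI)
    fix x assume "x \<in> T -` (B \<union> (S -` D K \<inter> space M)) \<inter> space M"
    then show "x \<in> (T -` B \<inter> space M) \<union> D K" by (auto simp: ST)
  next
    fix x assume x: "x \<in> (T -` B \<inter> space M) \<union> D K"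
    show "x \<in> T -` (B \<union> (S -` D K \<inter> space M)) \<inter> space M"
    proof (cases "x \<in> D K")
      case True
      then have "x \<in> space M" using Dsp by auto
      then show ?thesis using True by (auto simp: ST T_sp)
    qed (use x in auto)
  qed
  have key: "(\<integral>x. indicator (D (Suc K)) x * g x \<partial>M) \<le> measure N (W K)" for K
  proof -
    have mN: "measure N (W K) = measure M (T -` W K \<inter> space M)"
      using emN[OF Ws] by (simp add: measure_def)
    have sub: "T -` D (Suc K) \<inter> space M \<subseteq> D (Suc K) \<union> (T -` W K \<inter> space M)"
      unfolding TD TW using incD by (auto simp: incseq_Suc_iff)
    have Wfin: "emeasure M (W K) < \<infinity>"
      using emeasure_mono[of "W K" B M] B by (auto simp: W_def)
    have TWfin: "emeasure M (T -` W K \<inter> space M) < \<infinity>" by (rule F2(1)[OF Ws Wfin])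
    have "emeasure M (D (Suc K) \<union> (T -` W K \<inter> space M)) \<le> emeasure M (D (Suc K)) + emeasure M (T -` W K \<inter> space M)"
      by (rule emeasure_subadditive[OF Ds measurable_sets[OF meas Ws]])
    also have "\<dots> < \<infinity>" using TWfin Dfin[of "Suc K"] by simp
    finally have Ufin: "emeasure M (D (Suc K) \<union> (T -` W K \<inter> space M)) < \<infinity>" .
    have "measure M (T -` D (Suc K) \<inter> space M) \<le> measure M (D (Suc K) \<union> (T -` W K \<inter> space M))"
      by (rule measure_mono_fmeasurable[OF sub])
        (use Ds measurable_sets[OF meas Ws] measurable_sets[OF meas Ds] Ufin in \<open>auto intro!: fmeasurableI\<close>)
    also have "\<dots> \<le> measure M (D (Suc K)) + measure M (T -` W K \<inter> space M)"
      by (rule measure_Un_le[OF Ds measurable_sets[OF meas Ws]])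
    finally show ?thesis using F2(2)[OF Ds Dfin, of "Suc K"] mN by linarith
  qed
  have decW: "decseq W" using incD unfolding decseq_def incseq_def W_def by blast
  have W0: "emeasure M (\<Inter>i. W i) = 0"
  proof (rule ccontr)
    define Z where "Z = (\<Inter>i. W i)"
    have Zs: "Z \<in> sets M" using Ws by (auto simp: Z_def)
    assume "emeasure M (\<Inter>i. W i) \<noteq> 0"
    then have "0 < emeasure M Z" by (simp add: Z_def zero_less_iff_neq_zero)
    then obtain n where n: "n > 0" "0 < emeasure M ((T^^n) -` Z \<inter> Z)"
      using cons Zs unfolding conservative_def by blast
    have "(T^^n) -` Z \<inter> Z = {}"
    proof (rule ccontr)
      assume "(T^^n) -` Z \<inter> Z \<noteq> {}"
      then obtain x where x: "x \<in> Z" "(T^^n) x \<in> Z" by auto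
      then have xB: "x \<in> B" "(T^^n) x \<in> B" by (auto simp: Z_def W_def)
      have xsp: "x \<in> space M" using xB Bsp by auto
      obtain j where j: "n = Suc j" using n by (cases n) auto
      have "(S^^j) (S ((T^^n) x)) = x" using SnTn[OF xsp, of n] j by (simp add: funpow_swap1)
      then have "S ((T^^n) x) \<in> D j" using xB S_sp[OF Tn_sp[OF xsp]] unfolding D_def by (auto intro!: bexI[of _ j])
      then have "(T^^n) x \<notin> W j" using Tn_sp[OF xsp] by (auto simp: W_def)
      then show False using x by (auto simp: Z_def)
    qed
    then show False using n by simp
  qed
  have limW: "(\<lambda>K. measure N (W K)) \<longlonglongrightarrow> 0"
  proof -
    have "(\<lambda>K. measure N (W K)) \<longlonglongrightarrow> measure N (\<Inter>i. W i)"
    proof (rule Lim_measure_decseq)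
      show "emeasure N (W i) \<noteq> \<infinity>" for i
      proof -
        have "emeasure N (W i) \<le> emeasure N B"
          by (rule emeasure_mono) (use B in \<open>auto simp: W_def\<close>)
        also have "\<dots> < \<infinity>" using emN[OF B(1)] F2(1)[OF B] by simp
        finally show ?thesis by simp
      qed
    qed (use Ws decW in auto)
    moreover have "emeasure N (\<Inter>i. W i) = 0"
    proof -
      have Is: "(\<Inter>i. W i) \<in> sets M" using Ws by auto
      show ?thesis using emN[OF Is] null Is W0 by auto
    qed
    ultimately show ?thesis by (simp add: measure_def)
  qed
  define E where "E = (\<Union>K. D (Suc K))"
  have incD': "incseq (\<lambda>K. D (Suc K))" using incD by (auto simp: incseq_def)
  have limI: "(\<lambda>K. (\<integral>x. indicator (D (Suc K)) x * g x \<partial>M)) \<longlonglongrightarrow> (\<integral>x. indicator E x * g x \<partial>M)"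
  proof (rule integral_dominated_convergence[where w = "\<lambda>x. \<bar>g x\<bar>"])
    show "(\<lambda>x. indicator E x * g x) \<in> borel_measurable M"
      using Ds by (auto simp: E_def)
    show "(\<lambda>x. indicator (D (Suc K)) x * g x) \<in> borel_measurable M" for K
      using Ds by auto
    show "integrable M (\<lambda>x. \<bar>g x\<bar>)" using intg by auto
    show "AE x in M. (\<lambda>K. indicator (D (Suc K)) x * g x) \<longlonglongrightarrow> indicator E x * g x"
      unfolding E_def by (intro AE_I2 tendsto_mult_right LIMSEQ_indicator_incseq incD')
    show "AE x in M. norm (indicator (D (Suc K)) x * g x) \<le> \<bar>g x\<bar>" for K
      by (intro AE_I2) (auto simp: indicator_def)
  qed
  have "(\<integral>x. indicator E x * g x \<partial>M) \<le> 0"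
    by (rule LIMSEQ_le[OF limI limW]) (use key in auto)
  moreover have "E \<in> sets M" using Ds by (auto simp: E_def)
  moreover have "B \<subseteq> E" using D0 incD by (auto simp: E_def incseq_Suc_iff)
  ultimately show ?thesis by auto
qed

lemma approx: assumes "A \<in> sets M" "E \<in> sets M" "A \<subseteq> E"
  shows "\<bar>(\<integral>x. g x \<partial>M) - (\<integral>x. indicator E x * g x \<partial>M)\<bar>
     \<le> (\<integral>x. \<bar>g x\<bar> \<partial>M) - (\<integral>x. indicator A x * \<bar>g x\<bar> \<partial>M)"
proof -
  have iE: "integrable M (\<lambda>x. indicator E x * g x)"
    using integrable_real_mult_indicator[OF assms(2) intg] by (simp add: mult.commute)
  have ia: "integrable M (\<lambda>x. \<bar>g x\<bar>)" using intg by auto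
  have iA: "integrable M (\<lambda>x. indicator A x * \<bar>g x\<bar>)"
    using integrable_real_mult_indicator[OF assms(1) ia] by (simp add: mult.commute)
  have "\<bar>(\<integral>x. g x \<partial>M) - (\<integral>x. indicator E x * g x \<partial>M)\<bar> = \<bar>\<integral>x. g x - indicator E x * g x \<partial>M\<bar>"
    using iE intg by (simp add: Bochner_Integration.integral_diff)
  also have "\<dots> \<le> (\<integral>x. \<bar>g x - indicator E x * g x\<bar> \<partial>M)"
    by (rule integral_abs_bound)
  also have "\<dots> \<le> (\<integral>x. \<bar>g x\<bar> - indicator A x * \<bar>g x\<bar> \<partial>M)"
    by (rule integral_mono) (use iE intg ia iA assms(3) in \<open>auto simp: indicator_def\<close>)
  also have "\<dots> = (\<integral>x. \<bar>g x\<bar> \<partial>M) - (\<integral>x. indicator A x * \<bar>g x\<bar> \<partial>M)"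
    using ia iA by (simp add: Bochner_Integration.integral_diff)
  finally show ?thesis .
qed

lemma main: "(\<integral>x. g x \<partial>M) = 0"
proof -
  obtain A :: "nat \<Rightarrow> 'a set" where A: "range A \<subseteq> sets M" "(\<Union>i. A i) = space M"
      "\<And>i. emeasure M (A i) \<noteq> \<infinity>" "incseq A"
    using sigma_finite_incseq by blast
  define r where "r n = (\<integral>x. \<bar>g x\<bar> \<partial>M) - (\<integral>x. indicator (A n) x * \<bar>g x\<bar> \<partial>M)" for n
  have lim: "(\<lambda>n. (\<integral>x. indicator (A n) x * \<bar>g x\<bar> \<partial>M)) \<longlonglongrightarrow> (\<integral>x. indicator (\<Union>i. A i) x * \<bar>g x\<bar> \<partial>M)"
  proof (rule integral_dominated_convergence[where w = "\<lambda>x. \<bar>g x\<bar>"])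
    show "(\<lambda>x. indicator (\<Union>i. A i) x * \<bar>g x\<bar>) \<in> borel_measurable M"
      using A(2) by simp
    show "(\<lambda>x. indicator (A K) x * \<bar>g x\<bar>) \<in> borel_measurable M" for K
      using A(1) by auto
    show "integrable M (\<lambda>x. \<bar>g x\<bar>)" using intg by auto
    show "AE x in M. (\<lambda>K. indicator (A K) x * \<bar>g x\<bar>) \<longlonglongrightarrow> indicator (\<Union>i. A i) x * \<bar>g x\<bar>"
      by (intro AE_I2 tendsto_mult_right LIMSEQ_indicator_incseq A(4))
    show "AE x in M. norm (indicator (A K) x * \<bar>g x\<bar>) \<le> \<bar>g x\<bar>" for K
      by (intro AE_I2) (auto simp: indicator_def)
  qed
  have "(\<integral>x. indicator (\<Union>i. A i) x * \<bar>g x\<bar> \<partial>M) = (\<integral>x. \<bar>g x\<bar> \<partial>M)"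
    unfolding A(2) by (rule Bochner_Integration.integral_cong) auto
  with lim have rlim: "r \<longlonglongrightarrow> 0"
    unfolding r_def using tendsto_diff[OF tendsto_const[of "\<integral>x. \<bar>g x\<bar> \<partial>M"] lim] by simp
  have b: "\<bar>(\<integral>x. g x \<partial>M)\<bar> \<le> r n" for n
  proof -
    have As: "A n \<in> sets M" "emeasure M (A n) < \<infinity>" using A by (auto simp: less_top)
    obtain E1 where E1: "E1 \<in> sets M" "A n \<subseteq> E1" "0 \<le> (\<integral>x. indicator E1 x * g x \<partial>M)"
      using lower[OF As] by blast
    obtain E2 where E2: "E2 \<in> sets M" "A n \<subseteq> E2" "(\<integral>x. indicator E2 x * g x \<partial>M) \<le> 0"
      using upper[OF As] by blast
    show ?thesis using approx[OF As(1) E1(1,2)] approx[OF As(1) E2(1,2)] E1(3) E2(3)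
      unfolding r_def by linarith
  qed
  have "\<bar>(\<integral>x. g x \<partial>M)\<bar> \<le> 0"
    by (rule LIMSEQ_le_const[OF rlim]) (use b in auto)
  then show ?thesis by simp
qed

end

theorem proposition4p4:
  fixes M :: "'a measure" and T :: "'a \<Rightarrow> 'a"
  assumes "sigma_finite_measure M" and "standard_borel M" and "non_atomic M"
    and "T \<in> Aut1 M" and "conservative M T"
  shows "chi M T = 0"
proof -
  have A: "inv_nonsingular M T" "integrable M (\<lambda>x. Tder M T x - 1)"
    using assms(4) unfolding Aut1_def by auto
  have ax: "setting_axioms M T"
    unfolding setting_axioms_def using A assms(5) unfolding inv_nonsingular_def by blast
  interpret setting M T by (rule setting.intro[OF assms(1) ax])
  show ?thesis unfolding chi_def by (rule main)
qed

end
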